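(* For $d\ge1$ and $k\in\{-1,1\}$ let $\overline B(d,k;\lambda,z)=\prod_{m=1}^dB((-1)^{m+1}k;\lambda,z)$ (matrix product, factors ordered from $m=1$ on the left). Then for all $1\le i,j\le N$, $\lambda\in[0,1]$, $z\in(0,1]$, $$[\overline B(d,k;\lambda,z)]_{i,j}=\sum_{w\in\mathbb F_{i,j}^{(k)}(d)}z^{|w|_{\mathcal K}}\,\mathcal R(e_i,w;\lambda).$$
   Context: Fix an integer $N\ge 3$. Let $\mathcal G_N$ be the groupoid with object set $\{1,\dots,N\}$ generated by arrows $A_{i,j}^{(k)}$, $i\neq j\in\{1,\dots,N\}$, $k\in\{-1,1\}$, with source $i$ and target $j$, subject to the relations $A_{i,j}^{(k)}A_{j,\ell}^{(k)}=A_{i,\ell}^{(k)}$ for all $i,j,\ell$, $k$, with the convention $A_{i,i}^{(k)}:=e_i$ (unit at object $i$). Let $\mathcal A$ be its arrow set and $\mathcal A_i$ the arrows with source $i$. Every arrow has a unique reduced representation: either empty or $A_{i_1,i_2}^{(k)}A_{i_2,i_3}^{(-k)}\cdots A_{i_d,i_{d+1}}^{((-1)^{d+1}k)}$ with $d\ge1$, $i_\ell\ne i_{\ell+1}$; $|w|$ denotes its number $d$ of generators. A metric $|\cdot|_{\mathcal K}$ is given by values $|A_{i,j}^{(k)}|_{\mathcal K}\ge0$ on generators, $|e_i|_{\mathcal K}=0$, and $|w|_{\mathcal K}$ the sum of the values of the generators in the reduced representation of $w$. Let $\mathbb F_{i,j}^{(k)}(d)$ be the set of $w\in\mathcal A_i$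 with $|w|=d$, target $j$, and whose reduced representation has first generator with upper index $k$. Let $\{W_n\}_{n\ge0}$ be the Markov chain on $\mathcal A$ with $P(W_{n+1}=y\mid W_n=x)=p_{i,j}^{(k)}$ if $x^{-1}y=A_{i,j}^{(k)}$ with $i\ne j$ and $0$ otherwise, where $p_{i,j}^{(k)}\in(0,1)$ and $\sum_{j\ne i}\sum_{k=\pm1}p_{i,j}^{(k)}=1$ for each $i$; $P_x,E_x$ denote law and expectation with $W_0=x$. Let $\mathcal R(e_i,w;\lambda)=\sum_{n\ge0}P_{e_i}(\inf\{m\ge0:W_m=w\}=n)\lambda^n$. For $x\in\mathcal A$ let $T(0,x)=\inf\{n\ge0:W_n=W_0x\}$ and $R_{i,j}^{(k)}(\lambda)=E_{e_i}[\lambda^{T(0,A_{i,j}^{(k)})}]$. Let $B(k;\lambda,z)$ be the $N\times N$ matrix with $[B(k;\lambda,z)]_{i,j}=(1-\delta_{i,j})z^{|A_{i,j}^{(k)}|_{\mathcal K}}R_{i,j}^{(k)}(\lambda)$. *)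

theory Defs
  imports Complex_Main
begin

text \<open>Arrows of the groupoid G_N, in reduced representation:
  (i, [(i2,k1), (i3,k2), ..., (i_{d+1},k_d)]) stands for the arrow with source i
  given by A_{i,i2}^{(k1)} A_{i2,i3}^{(k2)} ... ; the empty list is the unit e_i.\<close>
type_synonym arrow = "nat \<times> (nat \<times> int) list"

fun alt_ok :: "nat \<Rightarrow> nat \<Rightarrow> (nat \<times> int) list \<Rightarrow> bool" where
  "alt_ok N prev [] = True"
| "alt_ok N prev [(t,s)] = (t \<in> {1..N} \<and> t \<noteq> prev \<and> s \<in> {-1,1})"
| "alt_ok N prev ((t,s) # (t',s') # ws) =
     (t \<in> {1..N} \<and> t \<noteq> prev \<and> s \<in> {-1,1} \<and> s' = - s \<and> alt_ok N t ((t',s') # ws))"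

definition valid_arrow :: "nat \<Rightarrow> arrow \<Rightarrow> bool" where
  "valid_arrow N w = (fst w \<in> {1..N} \<and> alt_ok N (fst w) (snd w))"

definition unit_arrow :: "nat \<Rightarrow> arrow" where
  "unit_arrow i = (i, [])"

definition gen_arrow :: "nat \<Rightarrow> nat \<Rightarrow> int \<Rightarrow> arrow" where
  "gen_arrow i j k = (i, [(j,k)])"

definition src :: "arrow \<Rightarrow> nat" where
  "src w = fst w"

definition tgt :: "arrow \<Rightarrow> nat" where
  "tgt w = (if snd w = [] then fst w else fst (last (snd w)))"

definition glen :: "arrow \<Rightarrow> nat" where
  "glen w = length (snd w)"

text \<open>Right multiplication x A_{tgt x, j}^{(k)} (for j \<noteq> tgt x), reduced using
  A_{a,t}^{(k)} A_{t,j}^{(k)} = A_{a,j}^{(k)} and A_{a,a}^{(k)} = e_a.\<close>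
definition mul_gen :: "arrow \<Rightarrow> nat \<Rightarrow> int \<Rightarrow> arrow" where
  "mul_gen x j k =
     (if snd x = [] then (fst x, [(j,k)])
      else if snd (last (snd x)) = k then
        (if tgt (fst x, butlast (snd x)) = j then (fst x, butlast (snd x))
         else (fst x, butlast (snd x) @ [(j,k)]))
      else (fst x, snd x @ [(j,k)]))"

text \<open>First-passage probabilities of the Markov chain W_n:
  fpass N p n x w = P_x(inf{m \<ge> 0. W_m = w} = n), defined via the transition kernel
  P(W_{n+1} = x A_{tgt x,j}^{(k)} | W_n = x) = p (tgt x) j k.\<close>
fun fpass :: "nat \<Rightarrow> (nat \<Rightarrow> nat \<Rightarrow> int \<Rightarrow> real) \<Rightarrow> nat \<Rightarrow> arrow \<Rightarrow> arrow \<Rightarrow> real" where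
  "fpass N p 0 x w = (if x = w then 1 else 0)"
| "fpass N p (Suc n) x w =
     (if x = w then 0
      else (\<Sum>j\<in>{1..N} - {tgt x}. \<Sum>k\<in>{-1,1::int}. p (tgt x) j k * fpass N p n (mul_gen x j k) w))"

definition hitR :: "nat \<Rightarrow> (nat \<Rightarrow> nat \<Rightarrow> int \<Rightarrow> real) \<Rightarrow> arrow \<Rightarrow> arrow \<Rightarrow> real \<Rightarrow> real" where
  "hitR N p x w lam = (\<Sum>n. fpass N p n x w * lam ^ n)"

text \<open>R_{i,j}^{(k)}(\<lambda>) = E_{e_i}[\<lambda>^{T(0, A_{i,j}^{(k)})}], where T(0,x) is the first n with
  W_n = W_0 x; with W_0 = e_i, W_0 x = x (and \<lambda>^\<infinity> = 0).\<close>
definition Rgen :: "nat \<Rightarrow> (nat \<Rightarrow> nat \<Rightarrow> int \<Rightarrow> real) \<Rightarrow> nat \<Rightarrow> nat \<Rightarrow> int \<Rightarrow> real \<Rightarrow> real" where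
  "Rgen N p i j k lam = (\<Sum>n. fpass N p n (unit_arrow i) (gen_arrow i j k) * lam ^ n)"

text \<open>The metric |w|_K: sum of generator weights Kw i j k = |A_{i,j}^{(k)}|_K along the
  reduced representation.\<close>
fun klen_aux :: "(nat \<Rightarrow> nat \<Rightarrow> int \<Rightarrow> real) \<Rightarrow> nat \<Rightarrow> (nat \<times> int) list \<Rightarrow> real" where
  "klen_aux Kw prev [] = 0"
| "klen_aux Kw prev ((t,s) # ws) = Kw prev t s + klen_aux Kw t ws"

definition klen :: "(nat \<Rightarrow> nat \<Rightarrow> int \<Rightarrow> real) \<Rightarrow> arrow \<Rightarrow> real" where
  "klen Kw w = klen_aux Kw (fst w) (snd w)"

definition Fset :: "nat \<Rightarrow> nat \<Rightarrow> nat \<Rightarrow> int \<Rightarrow> nat \<Rightarrow> arrow set" where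
  "Fset N i j k d = {w. valid_arrow N w \<and> src w = i \<and> glen w = d \<and> tgt w = j
                        \<and> snd w \<noteq> [] \<and> snd (hd (snd w)) = k}"

text \<open>N \<times> N matrices indexed by {1..N}, represented as functions.\<close>
definition matmul :: "nat \<Rightarrow> (nat \<Rightarrow> nat \<Rightarrow> real) \<Rightarrow> (nat \<Rightarrow> nat \<Rightarrow> real) \<Rightarrow> nat \<Rightarrow> nat \<Rightarrow> real" where
  "matmul N A B i j = (\<Sum>l\<in>{1..N}. A i l * B l j)"

definition matid :: "nat \<Rightarrow> nat \<Rightarrow> real" where
  "matid i j = (if i = j then 1 else 0)"

definition Bmat :: "nat \<Rightarrow> (nat \<Rightarrow> nat \<Rightarrow> int \<Rightarrow> real) \<Rightarrow> (nat \<Rightarrow> nat \<Rightarrow> int \<Rightarrow> real)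
                    \<Rightarrow> int \<Rightarrow> real \<Rightarrow> real \<Rightarrow> nat \<Rightarrow> nat \<Rightarrow> real" where
  "Bmat N Kw p k lam z i j = (if i = j then 0 else z powr (Kw i j k) * Rgen N p i j k lam)"

fun Bbar :: "nat \<Rightarrow> (nat \<Rightarrow> nat \<Rightarrow> int \<Rightarrow> real) \<Rightarrow> (nat \<Rightarrow> nat \<Rightarrow> int \<Rightarrow> real)
              \<Rightarrow> nat \<Rightarrow> int \<Rightarrow> real \<Rightarrow> real \<Rightarrow> nat \<Rightarrow> nat \<Rightarrow> real" where
  "Bbar N Kw p 0 k lam z = matid"
| "Bbar N Kw p (Suc d) k lam z = matmul N (Bmat N Kw p k lam z) (Bbar N Kw p d (- k) lam z)"

end

theory Submission
  imports Defs
begin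


lemma alt_ok_Cons:
  "alt_ok N prev ((t,s)#ws) = (t\<in>{1..N} \<and> t\<noteq>prev \<and> s\<in>{-1,1} \<and> (ws \<noteq> [] \<longrightarrow> snd (hd ws) = -s) \<and> alt_ok N t ws)"
  by (cases ws) auto

definition tg :: "nat \<Rightarrow> (nat \<times> int) list \<Rightarrow> nat" where
  "tg i xs = (if xs = [] then i else fst (last xs))"

lemma tgt_tg: "tgt x = tg (fst x) (snd x)"
  by (simp add: tgt_def tg_def)

lemma alt_ok_snoc:
  "alt_ok N prev (xs @ [(t,s)]) = (alt_ok N prev xs \<and> t\<in>{1..N} \<and> t \<noteq> tg prev xs \<and> s\<in>{-1,1}
      \<and> (xs \<noteq> [] \<longrightarrow> s = - snd (last xs)))"
proof (induction xs arbitrary: prev)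
  case Nil
  then show ?case by (simp add: tg_def)
next
  case (Cons a xs)
  obtain t1 s1 where a: "a = (t1,s1)" by force
  show ?case
  proof (cases xs)
    case Nil
    then show ?thesis using a by (auto simp: tg_def)
  next
    case (Cons c xs')
    then show ?thesis using a Cons.IH[of t1] by (auto simp: alt_ok_Cons tg_def)
  qed
qed

lemma alt_ok_set: "alt_ok N prev xs \<Longrightarrow> set xs \<subseteq> {1..N} \<times> {-1,1}"
  by (induction N prev xs rule: alt_ok.induct) auto

lemma fst_mul_gen[simp]: "fst (mul_gen x j k) = fst x"
  by (simp add: mul_gen_def)

lemma tgt_mul_gen[simp]: "tgt (mul_gen x j k) = j"
  by (auto simp: mul_gen_def tgt_def)

lemma tg_snoc[simp]: "tg i (xs @ [c]) = fst c"
  by (simp add: tg_def)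

lemma valid_mul_gen:
  assumes "valid_arrow N y" "j \<in> {1..N}" "j \<noteq> tgt y" "k \<in> {-1,1}"
  shows "valid_arrow N (mul_gen y j k)"
proof -
  obtain i ys where y: "y = (i, ys)" by force
  show ?thesis
  proof (cases ys rule: rev_cases)
    case Nil
    then show ?thesis using assms y by (auto simp: valid_arrow_def mul_gen_def tgt_def)
  next
    case (snoc xs c)
    obtain t s where c: "c = (t,s)" by force
    have v: "alt_ok N i xs" "t\<in>{1..N}" "t \<noteq> tg i xs" "s\<in>{-1,1}" "xs \<noteq> [] \<longrightarrow> s = - snd (last xs)" "i \<in> {1..N}"
      using assms(1) y snoc c by (auto simp: valid_arrow_def alt_ok_snoc)
    have jt: "j \<noteq> t" using assms(3) y snoc c by (simp add: tgt_def)
    show ?thesis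
    proof (cases "s = k")
      case True
      show ?thesis
      proof (cases "tg i xs = j")
        case True
        then show ?thesis using y snoc c \<open>s = k\<close> v by (simp add: mul_gen_def valid_arrow_def tgt_tg)
      next
        case False
        then show ?thesis using y snoc c \<open>s = k\<close> v assms by (simp add: mul_gen_def valid_arrow_def tgt_tg alt_ok_snoc)
      qed
    next
      case False
      have "alt_ok N i ((xs @ [(t,s)]) @ [(j,k)])"
        apply (subst alt_ok_snoc)
        using v assms jt False by (auto simp: alt_ok_snoc tg_def)
      then show ?thesis using y snoc c v assms jt False by (simp add: mul_gen_def valid_arrow_def)
    qed
  qed
qed

lemma butlast_snoc2[simp]: "butlast (xs @ [a, b]) = xs @ [a]"
  by (metis append.assoc append_Cons append_Nil butlast_snoc)
lemma tg_snoc2[simp]: "tg i (xs @ [a, b]) = fst b"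
  by (simp add: tg_def)
lemma tg_Nil[simp]: "tg i [] = i" by (simp add: tg_def)
lemma tg_single[simp]: "tg i [a] = fst a" by (simp add: tg_def)

lemma R1:
  assumes "valid_arrow N y" "a \<in> {1..N}" "a \<noteq> tgt y" "b \<noteq> a" "k \<in> {-1,1}"
  shows "mul_gen (mul_gen y a k) b k = (if b = tgt y then y else mul_gen y b k)"
proof -
  obtain i ys where y: "y = (i, ys)" by force
  have kk: "k \<noteq> - k" using assms(5) by auto
  show ?thesis
  proof (cases ys rule: rev_cases)
    case Nil
    then show ?thesis using assms y by (auto simp: mul_gen_def tgt_def)
  next
    case (snoc xs c)
    obtain t s where c: "c = (t,s)" by force
    have v: "alt_ok N i xs" "t\<in>{1..N}" "t \<noteq> tg i xs" "s\<in>{-1,1}" "xs \<noteq> [] \<longrightarrow> s = - snd (last xs)" "i \<in> {1..N}"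
      using assms(1) y snoc c by (auto simp: valid_arrow_def alt_ok_snoc)
    have ty: "tgt y = t" using y snoc c by (simp add: tgt_def)
    show ?thesis
    proof (cases "s = k")
      case True
      show ?thesis
      proof (cases "tg i xs = a")
        case True
        show ?thesis
        proof (cases "xs = []")
          case True
          then show ?thesis using y snoc c \<open>s = k\<close> \<open>tg i xs = a\<close> v ty assms by (auto simp: mul_gen_def tgt_tg tg_def)
        next
          case False
          then show ?thesis using y snoc c \<open>s = k\<close> \<open>tg i xs = a\<close> v ty assms kk by (auto simp: mul_gen_def tgt_tg)
        qed
      next
        case False
        then show ?thesis using y snoc c \<open>s = k\<close> v ty assms by (auto simp: mul_gen_def tgt_tg)
      qed
    next
      case False
      then show ?thesis using y snoc c v ty assms by (auto simp: mul_gen_def tgt_tg)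
    qed
  qed
qed

definition evw :: "arrow \<Rightarrow> (nat \<times> int) list \<Rightarrow> arrow" where
  "evw y xs = foldl (\<lambda>x c. mul_gen x (fst c) (snd c)) y xs"

lemma evw_Nil[simp]: "evw y [] = y" by (simp add: evw_def)
lemma evw_snoc[simp]: "evw y (xs @ [c]) = mul_gen (evw y xs) (fst c) (snd c)" by (simp add: evw_def)
lemma evw_single[simp]: "evw y [c] = mul_gen y (fst c) (snd c)" by (simp add: evw_def)
lemma fst_evw[simp]: "fst (evw y xs) = fst y"
  by (induction xs rule: rev_induct) auto

lemma evw_valid:
  assumes "valid_arrow N y" "alt_ok N (tgt y) xs"
  shows "valid_arrow N (evw y xs) \<and> tgt (evw y xs) = tg (tgt y) xs"
  using assms(2)
proof (induction xs rule: rev_induct)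
  case Nil
  then show ?case using assms by (simp add: tg_def)
next
  case (snoc c xs)
  obtain t s where c: "c = (t,s)" by force
  show ?case using snoc c assms by (auto simp: alt_ok_snoc intro!: valid_mul_gen)
qed

lemma evw_append:
  assumes "valid_arrow N y" "alt_ok N (tgt y) xs"
    "snd y = [] \<or> xs = [] \<or> snd (last (snd y)) \<noteq> snd (hd xs)"
  shows "evw y xs = (fst y, snd y @ xs)"
  using assms(2,3)
proof (induction xs rule: rev_induct)
  case Nil
  then show ?case by simp
next
  case (snoc c xs)
  obtain t s where c: "c = (t,s)" by force
  have a: "alt_ok N (tgt y) xs" "xs \<noteq> [] \<longrightarrow> s = - snd (last xs)" "s \<in> {-1,1}"
    using snoc.prems c by (auto simp: alt_ok_snoc)
  have IH: "evw y xs = (fst y, snd y @ xs)"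
    using snoc a by (cases xs) auto
  show ?case
  proof (cases "snd y @ xs = []")
    case True
    then show ?thesis using IH c by (simp add: mul_gen_def)
  next
    case False
    have "snd (last (snd y @ xs)) \<noteq> s"
    proof (cases "xs = []")
      case True
      then show ?thesis using snoc.prems c False by auto
    next
      case False
      then show ?thesis using a by auto
    qed
    then show ?thesis using IH c False by (simp add: mul_gen_def)
  qed
qed


lemma evw_hom:
  assumes "valid_arrow N y" "alt_ok N (tgt y) xs" "j \<in> {1..N}" "j \<noteq> tg (tgt y) xs" "k \<in> {-1,1}"
  shows "evw y (snd (mul_gen (tgt y, xs) j k)) = mul_gen (evw y xs) j k"
proof (cases xs rule: rev_cases)
  case Nil
  then show ?thesis by (simp add: mul_gen_def)
next
  case (snoc xs' c)
  obtain t1 s where c: "c = (t1,s)" by force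
  have a: "alt_ok N (tgt y) xs'" "t1 \<in> {1..N}" "t1 \<noteq> tg (tgt y) xs'"
    using assms(2) snoc c by (auto simp: alt_ok_snoc)
  have Y: "valid_arrow N (evw y xs')" "tgt (evw y xs') = tg (tgt y) xs'"
    using evw_valid[OF assms(1) a(1)] by auto
  have jt: "j \<noteq> t1" using assms(4) snoc c by simp
  show ?thesis
  proof (cases "s = k")
    case True
    have "mul_gen (mul_gen (evw y xs') t1 k) j k = (if j = tg (tgt y) xs' then evw y xs' else mul_gen (evw y xs') j k)"
      using R1[OF Y(1) a(2) _ jt assms(5)] a Y by simp
    moreover have "snd (mul_gen (tgt y, xs) j k) = (if j = tg (tgt y) xs' then xs' else xs' @ [(j,k)])"
      using snoc c True by (auto simp: mul_gen_def tgt_tg)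
    ultimately show ?thesis using snoc c True by simp
  next
    case False
    have "snd (mul_gen (tgt y, xs) j k) = xs @ [(j,k)]"
      using snoc c False by (simp add: mul_gen_def)
    then show ?thesis by (simp only: evw_snoc) simp
  qed
qed

lemma evw_comp:
  assumes "valid_arrow N y" "valid_arrow N a" "fst a = tgt y" "alt_ok N (tgt a) xs"
  shows "evw (evw y (snd a)) xs = evw y (snd (evw a xs))"
  using assms(4)
proof (induction xs rule: rev_induct)
  case Nil
  then show ?case by simp
next
  case (snoc c xs)
  obtain j k where c: "c = (j,k)" by force
  have a: "alt_ok N (tgt a) xs" "j \<in> {1..N}" "j \<noteq> tg (tgt a) xs" "k \<in> {-1,1}"
    using snoc.prems c by (auto simp: alt_ok_snoc)
  have A: "valid_arrow N (evw a xs)" "tgt (evw a xs) = tg (tgt a) xs"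
    using evw_valid[OF assms(2) a(1)] by auto
  have ax: "alt_ok N (tgt y) (snd (evw a xs))"
    using A(1) assms(3) by (simp add: valid_arrow_def)
  have eq: "(tgt y, snd (evw a xs)) = evw a xs" using assms(3) by (metis fst_evw prod.collapse)
  have "evw y (snd (mul_gen (tgt y, snd (evw a xs)) j k)) = mul_gen (evw y (snd (evw a xs))) j k"
    apply (rule evw_hom[OF assms(1) ax a(2) _ a(4)])
    using A a assms(3) by (simp add: tgt_tg)
  then have "evw y (snd (mul_gen (evw a xs) j k)) = mul_gen (evw y (snd (evw a xs))) j k"
    by (simp only: eq)
  then show ?case using snoc.IH[OF a(1)] c by simp
qed

lemma evw_unit:
  assumes "alt_ok N t xs" "t \<in> {1..N}"
  shows "evw (t, []) xs = (t, xs)"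
  using evw_append[of N "(t,[])" xs] assms by (simp add: valid_arrow_def tgt_def)

lemma evw_inj:
  assumes "i \<in> {1..N}" "alt_ok N i ys"
  shows "alt_ok N (tg i ys) xs \<Longrightarrow> alt_ok N (tg i ys) xs' \<Longrightarrow> evw (i, ys) xs = evw (i, ys) xs' \<Longrightarrow> xs = xs'"
  using assms(2)
proof (induction ys arbitrary: xs xs' rule: rev_induct)
  case Nil
  then show ?case using evw_unit[OF _ assms(1)] by simp
next
  case (snoc c ys)
  obtain t k where c: "c = (t,k)" by force
  define t0 where "t0 = tg i ys"
  have v: "alt_ok N i ys" "t\<in>{1..N}" "t \<noteq> t0" "k\<in>{-1,1}" "ys \<noteq> [] \<longrightarrow> k = - snd (last ys)"
    using snoc.prems c by (auto simp: alt_ok_snoc t0_def)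
  have t0N: "t0 \<in> {1..N}"
  proof (cases ys rule: rev_cases)
    case Nil then show ?thesis using assms(1) t0_def by simp
  next
    case (snoc zs d) then show ?thesis using v(1) t0_def by (cases d) (auto simp: alt_ok_snoc)
  qed
  define y' where "y' = (i, ys)"
  define a where "a = (t0, [(t,k)])"
  define a' where "a' = (t, [(t0,k)])"
  have vy': "valid_arrow N y'" using v assms y'_def by (simp add: valid_arrow_def)
  have va: "valid_arrow N a" using v t0N a_def by (simp add: valid_arrow_def)
  have va': "valid_arrow N a'" using v t0N a'_def by (auto simp: valid_arrow_def)
  have ty': "tgt y' = t0" using y'_def t0_def by (simp add: tgt_tg)
  have y: "(i, ys @ [c]) = evw y' (snd a)"
  proof -
    have "evw y' [(t,k)] = (i, ys @ [(t,k)])"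
      using evw_append[OF vy', of "[(t,k)]"] v ty' y'_def by (auto simp: tg_def)
    then show ?thesis using a_def c by simp
  qed
  have tgc: "tg i (ys @ [c]) = t" using c by simp
  have tga: "tgt a = t" "tgt a' = t0" using a_def a'_def by (auto simp: tgt_def)
  have xs: "alt_ok N t xs" "alt_ok N t xs'" using snoc.prems(1,2) tgc by auto
  have e1: "evw y' (snd (evw a xs)) = evw y' (snd (evw a xs'))"
    using snoc.prems(3) y evw_comp[OF vy' va _ , of xs] evw_comp[OF vy' va _, of xs'] xs ty' tga a_def by simp
  have ok: "alt_ok N t0 (snd (evw a xs))" "alt_ok N t0 (snd (evw a xs'))"
    using evw_valid[OF va, of xs] evw_valid[OF va, of xs'] xs tga a_def by (auto simp: valid_arrow_def)
  have "snd (evw a xs) = snd (evw a xs')"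
    using snoc.IH[OF _ _ _ v(1)] ok e1 y'_def t0_def by simp
  then have e2: "evw a xs = evw a xs'" by (metis fst_evw prod.collapse)
  have aa: "evw a' (snd a) = (t, [])" using a_def a'_def by (simp add: mul_gen_def tgt_def)
  have "evw (t,[]) xs = evw a' (snd (evw a xs))"
    using evw_comp[OF va' va _ , of xs] aa tga xs a_def by simp
  moreover have "evw (t,[]) xs' = evw a' (snd (evw a xs'))"
    using evw_comp[OF va' va _ , of xs'] aa tga xs a_def by simp
  ultimately have "evw (t,[]) xs = evw (t,[]) xs'" using e2 by simp
  then show ?case using evw_unit[OF xs(1) v(2)] evw_unit[OF xs(2) v(2)] by simp
qed


lemma evw_inj':
  assumes "valid_arrow N y" "alt_ok N (tgt y) xs" "alt_ok N (tgt y) xs'"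
  shows "evw y xs = evw y xs' \<longleftrightarrow> xs = xs'"
proof -
  have y: "y = (fst y, snd y)" by simp
  have "fst y \<in> {1..N}" "alt_ok N (fst y) (snd y)" "tg (fst y) (snd y) = tgt y"
    using assms(1) by (auto simp: valid_arrow_def tgt_tg)
  then show ?thesis using evw_inj[of "fst y" N "snd y" xs xs'] assms by auto
qed

lemma mul_gen_pair: "(i, snd (mul_gen (i, xs) j k)) = mul_gen (i, xs) j k"
  by (simp add: prod_eq_iff)

lemma valid_tgt: assumes hv: "valid_arrow N y" shows "tgt y \<in> {1..N}"
proof (cases "snd y" rule: rev_cases)
  case Nil
  then show ?thesis using hv by (simp add: valid_arrow_def tgt_def)
next
  case (snoc xs c)
  then show ?thesis using hv by (cases c) (auto simp: valid_arrow_def tgt_def alt_ok_snoc)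
qed

lemma fpass_transl:
  assumes "valid_arrow N y"
  shows "alt_ok N (tgt y) xs \<Longrightarrow> alt_ok N (tgt y) ws \<Longrightarrow>
     fpass N p n (evw y xs) (evw y ws) = fpass N p n (tgt y, xs) (tgt y, ws)"
proof (induction n arbitrary: xs)
  case 0
  then show ?case using evw_inj'[OF assms] by simp
next
  case (Suc n)
  have ty: "tgt y \<in> {1..N}" using valid_tgt[OF assms] .
  have tx: "tgt (evw y xs) = tgt (tgt y, xs)"
    using evw_valid[OF assms Suc.prems(1)] by (simp add: tgt_tg)
  have vx: "valid_arrow N (tgt y, xs)" using Suc.prems(1) ty by (simp add: valid_arrow_def)
  have "(\<Sum>j\<in>{1..N} - {tgt (evw y xs)}. \<Sum>k\<in>{-1,1::int}. p (tgt (evw y xs)) j k * fpass N p n (mul_gen (evw y xs) j k) (evw y ws))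
      = (\<Sum>j\<in>{1..N} - {tgt (tgt y, xs)}. \<Sum>k\<in>{-1,1::int}. p (tgt (tgt y, xs)) j k * fpass N p n (mul_gen (tgt y, xs) j k) (tgt y, ws))"
  proof (rule sum.cong[OF _ sum.cong], simp add: tx, simp)
    fix j k assume j: "j \<in> {1..N} - {tgt (tgt y, xs)}" and k: "k \<in> {-1,1::int}"
    let ?xs' = "snd (mul_gen (tgt y, xs) j k)"
    have m: "mul_gen (evw y xs) j k = evw y ?xs'"
      using evw_hom[OF assms Suc.prems(1), of j k] j k by (simp add: tgt_tg)
    have "valid_arrow N (mul_gen (tgt y, xs) j k)" using valid_mul_gen[OF vx, of j k] j k by simp
    then have ok: "alt_ok N (tgt y) ?xs'" by (simp add: valid_arrow_def)
    show "p (tgt (evw y xs)) j k * fpass N p n (mul_gen (evw y xs) j k) (evw y ws) =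
          p (tgt (tgt y, xs)) j k * fpass N p n (mul_gen (tgt y, xs) j k) (tgt y, ws)"
      using Suc.IH[OF ok Suc.prems(2)] m tx mul_gen_pair[of "tgt y" xs j k] by simp
  qed
  then show ?case using evw_inj'[OF assms Suc.prems] by simp
qed


definition Tset :: "arrow \<Rightarrow> int \<Rightarrow> arrow set" where
  "Tset u s = {x. fst x = fst u \<and> (\<exists>rest. rest \<noteq> [] \<and> snd x = snd u @ rest \<and> snd (hd rest) = s)}"

lemma snoc_split:
  assumes "zs @ [c] = us @ rest" "rest \<noteq> []"
  shows "(zs = us \<and> rest = [c]) \<or> (\<exists>rest0. rest0 \<noteq> [] \<and> zs = us @ rest0 \<and> hd rest0 = hd rest)"
proof (cases rest rule: rev_cases)
  case Nil then show ?thesis using assms by simp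
next
  case (snoc r0 d)
  then have "zs = us @ r0" "c = d" using assms(1) by auto
  then show ?thesis using snoc by (cases r0) auto
qed

lemma Tset_closed:
  assumes "x \<notin> Tset u s" "x \<noteq> u"
  shows "mul_gen x j k \<notin> Tset u s"
proof
  assume A: "mul_gen x j k \<in> Tset u s"
  obtain i xs where x: "x = (i, xs)" by force
  obtain rest where r: "i = fst u" "rest \<noteq> []" "snd (mul_gen x j k) = snd u @ rest" "snd (hd rest) = s"
    using A x by (auto simp: Tset_def)
  have notT: "\<And>rest0. rest0 \<noteq> [] \<Longrightarrow> xs = snd u @ rest0 \<Longrightarrow> snd (hd rest0) = s \<Longrightarrow> False"
    using assms(1) x r(1) by (auto simp: Tset_def)
  have nu: "xs \<noteq> snd u" using assms(2) x r(1) by (metis prod.collapse)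
  show False
  proof (cases "xs = []")
    case True
    then have "[(j,k)] = snd u @ rest" using r x by (simp add: mul_gen_def)
    then have "snd u = []" using r(2) by (cases "snd u") auto
    then show False using nu True by simp
  next
    case False
    then have xs: "xs = butlast xs @ [last xs]" by simp
    show False
    proof (cases "snd (last xs) = k")
      case k: True
      show False
      proof (cases "tgt (i, butlast xs) = j")
        case True
        then have "butlast xs = snd u @ rest" using r x False k by (simp add: mul_gen_def)
        then show False using notT[of "rest @ [last xs]"] r xs by (metis append.assoc append_is_Nil_conv hd_append2)
      next
        case nj: False
        then have e: "butlast xs @ [(j,k)] = snd u @ rest" using r x False k by (simp add: mul_gen_def)
        from snoc_split[OF e r(2)] show False
        proof
          assume "butlast xs = snd u \<and> rest = [(j, k)]"
          then show False using notT[of "[last xs]"] xs k r(4) by auto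
        next
          assume "\<exists>rest0. rest0 \<noteq> [] \<and> butlast xs = snd u @ rest0 \<and> hd rest0 = hd rest"
          then obtain rest0 where "rest0 \<noteq> []" "butlast xs = snd u @ rest0" "hd rest0 = hd rest" by blast
          then show False using notT[of "rest0 @ [last xs]"] r xs by (metis append.assoc append_is_Nil_conv hd_append2)
        qed
      qed
    next
      case k: False
      then have e: "xs @ [(j,k)] = snd u @ rest" using r x False by (simp add: mul_gen_def)
      from snoc_split[OF e r(2)] show False
      proof
        assume "xs = snd u \<and> rest = [(j, k)]"
        then show False using nu by simp
      next
        assume "\<exists>rest0. rest0 \<noteq> [] \<and> xs = snd u @ rest0 \<and> hd rest0 = hd rest"
        then obtain rest0 where "rest0 \<noteq> []" "xs = snd u @ rest0" "hd rest0 = hd rest" by blast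
        then show False using notT[of rest0] r by simp
      qed
    qed
  qed
qed

lemma u_notin_T: "u \<notin> Tset u s"
  by (auto simp: Tset_def)

lemma fpass_self: "fpass N p m u u = (if m = 0 then 1 else 0)"
  by (cases m) auto

lemma fpass_conv:
  assumes "w \<in> Tset u s"
  shows "x \<notin> Tset u s \<Longrightarrow> fpass N p n x w = (\<Sum>m\<le>n. fpass N p m x u * fpass N p (n - m) u w)"
proof (induction n arbitrary: x)
  case 0
  have "x \<noteq> w" using 0 assms by auto
  moreover have "u \<noteq> w" using assms u_notin_T[of u s] by blast
  ultimately show ?case by simp
next
  case (Suc n)
  show ?case
  proof (cases "x = u")
    case True
    have "(\<Sum>m\<le>Suc n. fpass N p m u u * fpass N p (Suc n - m) u w) = (\<Sum>m\<le>Suc n. if m = 0 then fpass N p (Suc n - m) u w else 0)"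
      by (rule sum.cong) (auto simp: fpass_self)
    also have "\<dots> = fpass N p (Suc n) u w" by (simp add: sum.delta)
    finally show ?thesis using True by simp
  next
    case False
    have xw: "x \<noteq> w" using Suc.prems assms by auto
    have "fpass N p (Suc n) x w = (\<Sum>j\<in>{1..N} - {tgt x}. \<Sum>k\<in>{-1,1::int}. p (tgt x) j k *
            (\<Sum>m\<le>n. fpass N p m (mul_gen x j k) u * fpass N p (n - m) u w))"
      using xw Suc.IH[OF Tset_closed[OF Suc.prems False]] by simp
    also have "\<dots> = (\<Sum>m\<le>n. (\<Sum>j\<in>{1..N} - {tgt x}. \<Sum>k\<in>{-1,1::int}. p (tgt x) j k *
            fpass N p m (mul_gen x j k) u) * fpass N p (n - m) u w)"
      by (simp add: sum_distrib_left sum_distrib_right sum.swap[of _ "{..n}"] mult.assoc distrib_right)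
    also have "\<dots> = (\<Sum>m\<le>n. fpass N p (Suc m) x u * fpass N p (Suc n - Suc m) u w)"
      using False by simp
    also have "\<dots> = (\<Sum>m\<le>Suc n. fpass N p m x u * fpass N p (Suc n - m) u w)"
    proof -
      have z: "fpass N p 0 x u * fpass N p (Suc n - 0) u w = 0" using False by simp
      show ?thesis by (simp only: sum.atMost_Suc_shift z add_0_left)
    qed
    finally show ?thesis .
  qed
qed


definition pok :: "nat \<Rightarrow> (nat \<Rightarrow> nat \<Rightarrow> int \<Rightarrow> real) \<Rightarrow> bool" where
  "pok N p = ((\<forall>a b s. a \<in> {1..N} \<longrightarrow> b \<in> {1..N} \<longrightarrow> a \<noteq> b \<longrightarrow> s \<in> {-1,1} \<longrightarrow> 0 \<le> p a b s)
     \<and> (\<forall>a. a \<in> {1..N} \<longrightarrow> (\<Sum>b\<in>{1..N} - {a}. \<Sum>s\<in>{-1,1::int}. p a b s) = 1))"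

lemma fpass_nonneg:
  assumes "pok N p"
  shows "tgt x \<in> {1..N} \<Longrightarrow> 0 \<le> fpass N p n x w"
proof (induction n arbitrary: x)
  case 0 then show ?case by simp
next
  case (Suc n)
  have "0 \<le> (\<Sum>j\<in>{1..N} - {tgt x}. \<Sum>k\<in>{-1,1::int}. p (tgt x) j k * fpass N p n (mul_gen x j k) w)"
  proof (intro sum_nonneg mult_nonneg_nonneg)
    fix j k assume "j \<in> {1..N} - {tgt x}" "k \<in> {-1,1::int}"
    then show "0 \<le> p (tgt x) j k" "0 \<le> fpass N p n (mul_gen x j k) w"
      using assms Suc by (auto simp: pok_def)
  qed
  then show ?case by simp
qed

lemma fpass_psum:
  assumes "pok N p"
  shows "tgt x \<in> {1..N} \<Longrightarrow> (\<Sum>n<M. fpass N p n x w) \<le> 1"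
proof (induction M arbitrary: x)
  case 0 then show ?case by simp
next
  case (Suc M)
  show ?case
  proof (cases "x = w")
    case True
    then show ?thesis by (simp add: sum.lessThan_Suc_shift del: sum.lessThan_Suc)
  next
    case False
    have "(\<Sum>n<Suc M. fpass N p n x w) = (\<Sum>n<M. fpass N p (Suc n) x w)"
      using False by (simp add: sum.lessThan_Suc_shift del: sum.lessThan_Suc fpass.simps(2))
    also have "\<dots> = (\<Sum>j\<in>{1..N} - {tgt x}. \<Sum>k\<in>{-1,1::int}. p (tgt x) j k * (\<Sum>n<M. fpass N p n (mul_gen x j k) w))"
      using False by (simp add: sum_distrib_left sum.swap[of _ "{..<M}"] sum.distrib)
    also have "\<dots> \<le> (\<Sum>j\<in>{1..N} - {tgt x}. \<Sum>k\<in>{-1,1::int}. p (tgt x) j k * 1)"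
    proof (intro sum_mono mult_left_mono)
      fix j k assume "j \<in> {1..N} - {tgt x}" "k \<in> {-1,1::int}"
      then show "0 \<le> p (tgt x) j k" "(\<Sum>n<M. fpass N p n (mul_gen x j k) w) \<le> 1"
        using assms Suc by (auto simp: pok_def)
    qed
    also have "\<dots> = 1" using assms Suc.prems by (simp add: pok_def)
    finally show ?thesis .
  qed
qed

lemma fpass_summable:
  assumes "pok N p" "tgt x \<in> {1..N}" "0 \<le> lam" "lam \<le> 1"
  shows "summable (\<lambda>n. fpass N p n x w * lam ^ n)"
proof -
  have s: "summable (\<lambda>n. fpass N p n x w)"
  proof (rule bounded_imp_summable)
    show "0 \<le> fpass N p n x w" for n using fpass_nonneg[OF assms(1,2)] .
    show "(\<Sum>k\<le>n. fpass N p k x w) \<le> 1" for n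
      using fpass_psum[OF assms(1,2), where M="Suc n"] by (simp add: lessThan_Suc_atMost)
  qed
  show ?thesis
  proof (rule summable_comparison_test'[OF s])
    fix n :: nat
    have "0 \<le> fpass N p n x w" using fpass_nonneg[OF assms(1,2)] .
    moreover have "lam ^ n \<le> 1" "0 \<le> lam ^ n" using assms(3,4) by (auto simp: power_le_one)
    ultimately show "norm (fpass N p n x w * lam ^ n) \<le> fpass N p n x w"
      by (simp add: abs_mult mult_left_le)
  qed
qed


lemma hitR_split:
  assumes pk: "pok N p" and i: "i \<in> {1..N}" and l: "l \<in> {1..N}" "l \<noteq> i" and k: "k \<in> {-1,1}"
    and v: "valid_arrow N (l, vs)" "vs \<noteq> []" "snd (hd vs) = -k"
    and lam: "0 \<le> lam" "lam \<le> 1"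
  shows "hitR N p (i,[]) (i, (l,k)#vs) lam = Rgen N p i l k lam * hitR N p (l,[]) (l,vs) lam"
proof -
  define a where "a = (i, [(l,k)])"
  define w where "w = (i, (l,k)#vs)"
  have va: "valid_arrow N a" using i l k a_def by (auto simp: valid_arrow_def)
  have ta: "tgt a = l" using a_def by (simp add: tgt_def)
  have okv: "alt_ok N (tgt a) vs" using v ta by (simp add: valid_arrow_def)
  have kk: "k \<noteq> -k" using k by auto
  have wa: "w = evw a vs" using evw_append[OF va okv] a_def w_def v(3) kk by simp
  have aa: "a = evw a []" by simp
  have tr: "fpass N p m a w = fpass N p m (l,[]) (l,vs)" for m
    using fpass_transl[OF va, of "[]" vs] okv ta wa by simp
  have wT: "w \<in> Tset a (-k)" using w_def a_def v(2,3) by (auto simp: Tset_def)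
  have eT: "(i,[]) \<notin> Tset a (-k)" using a_def by (auto simp: Tset_def)
  have conv: "fpass N p n (i,[]) w = (\<Sum>m\<le>n. fpass N p m (i,[]) a * fpass N p (n - m) (l,[]) (l,vs))" for n
    using fpass_conv[OF wT eT] tr by simp
  define A where "A m = fpass N p m (i,[]) a * lam ^ m" for m
  define B where "B m = fpass N p m (l,[]) (l,vs) * lam ^ m" for m
  have ti: "tgt (i,[]) \<in> {1..N}" "tgt (l,[]) \<in> {1..N}" using i l by (auto simp: tgt_def)
  have An: "A m \<ge> 0" "B m \<ge> 0" for m
    using fpass_nonneg[OF pk ti(1)] fpass_nonneg[OF pk ti(2)] lam A_def B_def by auto
  have sA: "summable (\<lambda>m. norm (A m))"
    using fpass_summable[OF pk ti(1) lam] An A_def by simp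
  have sB: "summable (\<lambda>m. norm (B m))"
    using fpass_summable[OF pk ti(2) lam] An B_def by simp
  have cp: "(\<lambda>n. \<Sum>m\<le>n. A m * B (n - m)) sums (suminf A * suminf B)"
    by (rule Cauchy_product_sums[OF sA sB])
  have eq: "(\<Sum>m\<le>n. A m * B (n - m)) = fpass N p n (i,[]) w * lam ^ n" for n
  proof -
    have "(\<Sum>m\<le>n. A m * B (n - m)) = (\<Sum>m\<le>n. fpass N p m (i,[]) a * fpass N p (n - m) (l,[]) (l,vs) * lam ^ n)"
    proof (rule sum.cong)
      fix m assume "m \<in> {..n}"
      then have "lam ^ m * lam ^ (n - m) = lam ^ n" by (simp add: power_add[symmetric])
      show "A m * B (n - m) = fpass N p m (i,[]) a * fpass N p (n - m) (l,[]) (l,vs) * lam ^ n"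
      proof -
        have "A m * B (n - m) = fpass N p m (i,[]) a * fpass N p (n - m) (l,[]) (l,vs) * (lam ^ m * lam ^ (n - m))"
          by (simp add: A_def B_def mult_ac)
        then show ?thesis using \<open>lam ^ m * lam ^ (n - m) = lam ^ n\<close> by simp
      qed
    qed simp
    also have "\<dots> = fpass N p n (i,[]) w * lam ^ n" using conv by (simp add: sum_distrib_right)
    finally show ?thesis .
  qed
  have "(\<lambda>n. fpass N p n (i,[]) w * lam ^ n) sums (suminf A * suminf B)" using cp eq by simp
  then have "hitR N p (i,[]) w lam = suminf A * suminf B" by (simp add: hitR_def sums_iff)
  moreover have "suminf A = Rgen N p i l k lam" by (simp add: A_def[abs_def] Rgen_def unit_arrow_def gen_arrow_def a_def)
  moreover have "suminf B = hitR N p (l,[]) (l,vs) lam" by (simp add: B_def[abs_def] hitR_def)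
  ultimately show ?thesis using w_def by simp
qed


lemma Fset_finite: "finite (Fset N i j k d)"
proof -
  have "Fset N i j k d \<subseteq> {i} \<times> {xs. set xs \<subseteq> {1..N} \<times> {-1,1} \<and> length xs = d}"
    using alt_ok_set by (fastforce simp: Fset_def valid_arrow_def src_def glen_def)
  moreover have "finite ({i} \<times> {xs. set xs \<subseteq> {1..N} \<times> {-1,1::int} \<and> length xs = d})"
    by (intro finite_cartesian_product finite_lists_length_eq) auto
  ultimately show ?thesis by (rule finite_subset)
qed

lemma Fset_1:
  assumes "i \<in> {1..N}" "j \<in> {1..N}" "k \<in> {-1,1}"
  shows "Fset N i j k 1 = (if i = j then {} else {(i,[(j,k)])})"
proof -
  have "w \<in> Fset N i j k 1 \<longleftrightarrow> i \<noteq> j \<and> w = (i,[(j,k)])" for w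
  proof -
    obtain a xs where w: "w = (a, xs)" by force
    show ?thesis
    proof (cases xs)
      case Nil then show ?thesis using w by (auto simp: Fset_def glen_def)
    next
      case (Cons c ys)
      then show ?thesis using w assms
        by (cases c; cases ys) (auto simp: Fset_def glen_def valid_arrow_def src_def tgt_def)
    qed
  qed
  then show ?thesis by auto
qed

lemma Fset_Suc:
  assumes "i \<in> {1..N}" "k \<in> {-1,1}"
  shows "Fset N i j k (Suc (Suc d)) = (\<lambda>(l,v). (i, (l,k) # snd v)) ` (SIGMA l:{1..N}-{i}. Fset N l j (-k) (Suc d))"
proof (rule set_eqI)
  fix w
  show "w \<in> Fset N i j k (Suc (Suc d)) \<longleftrightarrow> w \<in> (\<lambda>(l,v). (i, (l,k) # snd v)) ` (SIGMA l:{1..N}-{i}. Fset N l j (-k) (Suc d))"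
  proof
    assume A: "w \<in> Fset N i j k (Suc (Suc d))"
    obtain a xs where w: "w = (a, xs)" by force
    obtain l s vs where xs: "xs = (l,s) # vs" using A w by (cases xs) (auto simp: Fset_def glen_def)
    have "a = i" "s = k" "length vs = Suc d" "tgt (l, vs) = j" "l \<in> {1..N} - {i}" "valid_arrow N (l, vs)"
      "vs \<noteq> []" "snd (hd vs) = -k"
      using A w xs by (auto simp: Fset_def glen_def src_def tgt_def valid_arrow_def alt_ok_Cons)
    then have "(l, (l, vs)) \<in> (SIGMA l:{1..N}-{i}. Fset N l j (-k) (Suc d))"
      by (auto simp: Fset_def glen_def src_def)
    then show "w \<in> (\<lambda>(l,v). (i, (l,k) # snd v)) ` (SIGMA l:{1..N}-{i}. Fset N l j (-k) (Suc d))"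
      using w xs \<open>a = i\<close> \<open>s = k\<close> by (auto intro!: image_eqI[where x="(l,(l,vs))"])
  next
    assume "w \<in> (\<lambda>(l,v). (i, (l,k) # snd v)) ` (SIGMA l:{1..N}-{i}. Fset N l j (-k) (Suc d))"
    then obtain x where x: "x \<in> (SIGMA l:{1..N}-{i}. Fset N l j (-k) (Suc d))" "w = (\<lambda>(l,v). (i, (l,k) # snd v)) x" by blast
    obtain l v where "x = (l, v)" by (cases x)
    then have lv: "l \<in> {1..N}-{i}" "v \<in> Fset N l j (-k) (Suc d)" "w = (i, (l,k) # snd v)" using x by auto
    obtain vs where v: "v = (l, vs)" using lv(2) by (cases v) (auto simp: Fset_def src_def)
    have "valid_arrow N (l, vs)" "vs \<noteq> []" "snd (hd vs) = -k" "length vs = Suc d" "tgt (l,vs) = j"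
      using lv(2) v by (auto simp: Fset_def glen_def src_def)
    then show "w \<in> Fset N i j k (Suc (Suc d))"
      using lv(1,3) v assms by (auto simp: Fset_def glen_def src_def tgt_def valid_arrow_def alt_ok_Cons)
  qed
qed


lemma main_ind:
  assumes pk: "pok N p" and j: "j \<in> {1..N}" and lam: "0 \<le> lam" "lam \<le> 1"
  shows "i \<in> {1..N} \<Longrightarrow> k \<in> {-1,1} \<Longrightarrow> Bbar N Kw p (Suc d) k lam z i j
           = (\<Sum>w\<in>Fset N i j k (Suc d). z powr (klen Kw w) * hitR N p (unit_arrow i) w lam)"
proof (induction d arbitrary: i k)
  case 0
  have "Bbar N Kw p (Suc 0) k lam z i j = (\<Sum>l\<in>{1..N}. Bmat N Kw p k lam z i l * matid l j)"
    by (simp add: matmul_def)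
  also have "\<dots> = Bmat N Kw p k lam z i j"
    using j by (simp add: matid_def if_distrib[of "\<lambda>x. _ * x"] sum.delta' cong: if_cong)
  also have "\<dots> = (\<Sum>w\<in>Fset N i j k 1. z powr (klen Kw w) * hitR N p (unit_arrow i) w lam)"
    using Fset_1[OF 0(1) j 0(2)]
    by (simp add: Bmat_def klen_def hitR_def Rgen_def gen_arrow_def)
  finally show ?case by simp
next
  case (Suc d)
  define F where "F w = z powr (klen Kw w) * hitR N p (unit_arrow (fst w)) w lam" for w
  define g where "g = (\<lambda>(l::nat,v::arrow). (i, (l,k) # snd v))"
  have mk: "- k \<in> {-1,1}" using Suc.prems by auto
  have IH: "Bbar N Kw p (Suc d) (-k) lam z l j = (\<Sum>v\<in>Fset N l j (-k) (Suc d). F v)" if "l \<in> {1..N}" for l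
    using Suc.IH[OF that mk] by (auto simp: F_def Fset_def src_def intro!: sum.cong)
  have "Bbar N Kw p (Suc (Suc d)) k lam z i j = (\<Sum>l\<in>{1..N}. Bmat N Kw p k lam z i l * Bbar N Kw p (Suc d) (-k) lam z l j)"
    by (simp add: matmul_def)
  also have "\<dots> = (\<Sum>l\<in>{1..N}-{i}. Bmat N Kw p k lam z i l * Bbar N Kw p (Suc d) (-k) lam z l j)"
    using Suc.prems(1) by (simp add: sum.remove Bmat_def)
  also have "\<dots> = (\<Sum>l\<in>{1..N}-{i}. \<Sum>v\<in>Fset N l j (-k) (Suc d). F (g (l, v)))"
  proof (rule sum.cong[OF refl])
    fix l assume l: "l \<in> {1..N}-{i}"
    have "Bmat N Kw p k lam z i l * Bbar N Kw p (Suc d) (-k) lam z l j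
        = (\<Sum>v\<in>Fset N l j (-k) (Suc d). Bmat N Kw p k lam z i l * F v)"
      using IH l by (simp add: sum_distrib_left)
    also have "\<dots> = (\<Sum>v\<in>Fset N l j (-k) (Suc d). F (g (l, v)))"
    proof (rule sum.cong[OF refl])
      fix v assume v: "v \<in> Fset N l j (-k) (Suc d)"
      obtain vs where vs: "v = (l, vs)" using v by (cases v) (auto simp: Fset_def src_def)
      have vv: "valid_arrow N (l, vs)" "vs \<noteq> []" "snd (hd vs) = -k"
        using v vs by (auto simp: Fset_def)
      have h: "hitR N p (i,[]) (i, (l,k)#vs) lam = Rgen N p i l k lam * hitR N p (l,[]) (l,vs) lam"
        using hitR_split[OF pk Suc.prems(1) _ _ Suc.prems(2) vv(1,2) _ lam] l vv(3) by simp
      have kl: "klen Kw (i, (l,k)#vs) = Kw i l k + klen Kw (l, vs)" by (simp add: klen_def)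
      show "Bmat N Kw p k lam z i l * F v = F (g (l, v))"
        using l vs h kl by (simp add: Bmat_def F_def g_def unit_arrow_def powr_add mult_ac)
    qed
    finally show "Bmat N Kw p k lam z i l * Bbar N Kw p (Suc d) (-k) lam z l j = (\<Sum>v\<in>Fset N l j (-k) (Suc d). F (g (l, v)))" .
  qed
  also have "\<dots> = (\<Sum>x\<in>(SIGMA l:{1..N}-{i}. Fset N l j (-k) (Suc d)). F (g x))"
    using sum.Sigma[of "{1..N}-{i}" "\<lambda>l. Fset N l j (-k) (Suc d)" "\<lambda>l v. F (g (l,v))"]
    by (simp add: Fset_finite split_def)
  also have "\<dots> = (\<Sum>w\<in>g ` (SIGMA l:{1..N}-{i}. Fset N l j (-k) (Suc d)). F w)"
  proof (rule sum.reindex[symmetric, unfolded comp_def])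
    show "inj_on g (SIGMA l:{1..N}-{i}. Fset N l j (-k) (Suc d))"
    proof (rule inj_onI)
      fix x y assume x: "x \<in> (SIGMA l:{1..N}-{i}. Fset N l j (-k) (Suc d))" and y: "y \<in> (SIGMA l:{1..N}-{i}. Fset N l j (-k) (Suc d))"
        and e: "g x = g y"
      obtain l v where xl: "x = (l, v)" by (cases x)
      obtain l' v' where yl: "y = (l', v')" by (cases y)
      have "fst v = l" "fst v' = l'" using x y xl yl by (auto simp: Fset_def src_def)
      then show "x = y" using e xl yl by (simp add: g_def prod_eq_iff)
    qed
  qed
  also have "\<dots> = (\<Sum>w\<in>Fset N i j k (Suc (Suc d)). F w)"
    using Fset_Suc[OF Suc.prems, of j d] g_def by simp
  also have "\<dots> = (\<Sum>w\<in>Fset N i j k (Suc (Suc d)). z powr (klen Kw w) * hitR N p (unit_arrow i) w lam)"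
    by (rule sum.cong) (auto simp: F_def Fset_def src_def)
  finally show ?case .
qed


theorem lemma6p3:
  fixes N :: nat and p Kw :: "nat \<Rightarrow> nat \<Rightarrow> int \<Rightarrow> real"
    and d i j :: nat and k :: int and lam z :: real
  assumes N3: "N \<ge> 3"
    and p_pos: "\<And>a b s. a \<in> {1..N} \<Longrightarrow> b \<in> {1..N} \<Longrightarrow> a \<noteq> b \<Longrightarrow> s \<in> {-1,1} \<Longrightarrow>
                   0 < p a b s \<and> p a b s < 1"
    and p_sum: "\<And>a. a \<in> {1..N} \<Longrightarrow> (\<Sum>b\<in>{1..N} - {a}. \<Sum>s\<in>{-1,1::int}. p a b s) = 1"
    and K_nonneg: "\<And>a b s. a \<in> {1..N} \<Longrightarrow> b \<in> {1..N} \<Longrightarrow> a \<noteq> b \<Longrightarrow> s \<in> {-1,1} \<Longrightarrow>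
                   0 \<le> Kw a b s"
    and d: "d \<ge> 1" and k: "k \<in> {-1,1}"
    and ij: "i \<in> {1..N}" "j \<in> {1..N}"
    and lam: "0 \<le> lam" "lam \<le> 1"
    and z: "0 < z" "z \<le> 1"
  shows "Bbar N Kw p d k lam z i j
           = (\<Sum>w\<in>Fset N i j k d. z powr (klen Kw w) * hitR N p (unit_arrow i) w lam)"
  proof -
  have pk: "pok N p"
    unfolding pok_def using p_pos p_sum by (auto intro: less_imp_le)
  obtain d' where dd: "d = Suc d'" using d by (cases d) auto
  show ?thesis using main_ind[OF pk ij(2) lam, where i=i and k=k and d=d' and Kw=Kw and z=z] ij(1) k dd by simp
qed

end
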